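(* Let $M$ be an entrywise nonnegative $m\times n$ real matrix and let $M=AW$ be a stable nonnegative matrix factorization with $A\in\mathbb{R}_{\ge0}^{m\times r}$, $W\in\mathbb{R}_{\ge0}^{r\times n}$. Let $s=\mathrm{rank}(A)$, $t=\mathrm{rank}(W)$, let $U\subseteq[m]$ be a set of $s$ linearly independent rows of $A$ and $V\subseteq[n]$ a set of $t$ linearly independent columns of $W$, and let $B_1,\dots,B_p$ be the ensemble of $A$ at $U$ and $C_1,\dots,C_q$ the ensemble of $W$ at $V$. Then the test $\mathbb P$ outputs PASS on these $B_1,\dots,B_p$ and $C_1,\dots,C_q$.
   Context: Notation: $M_i$ is the $i$-th column, $M^j$ the $j$-th row; $A_S$ = columns in $S$, $A^U$ = rows in $U$; $M_i^U$ the entries of $M_i$ in rows $U$, $M^j_V$ the entries of $M^j$ in columns $V$. $\mathrm{aff}(A)=\{\sum_k\alpha_kA_k:\alpha_k\ge0\}$. A subset $S\subseteq[r]$ of columns of $A$ is admissible for $v\in\mathbb{R}^m$ if $v\in\mathrm{aff}(A_S)$; a subset $T\subseteq[r]$ of rows of $W$ is admissible for a row vector $u$ if $u$ is a nonnegative combination of the rows of $W^T$. Support = set of indices of nonzero entries. Lexicographic ordering on subsets of $[r]$: if $|S|<|T|$ then $S$ precedes $T$; equal-size subsets compared by standard lexicographic order. $M=AW$ is stable if, with $S_i$ the lexicographically first subset of columns of $A$ admissible for $M_i$ and $T_j$ the lexicographically first subset of rows of $W$ admissible for $M^j$, each $W_i$ is supported in $S_i$ and each row $A^j$ is supported in $T_j$.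 Ensemble of $A$ at $U$: with $S_1,\dots,S_p$ all sets of $s$ linearly independent columns of $A$ in lexicographic order, $B_k$ is the $r\times s$ matrix zero on rows outside $S_k$ whose restriction to rows $S_k$ is $(A^U_{S_k})^{-1}$. Ensemble of $W$ at $V$: with $T_1,\dots,T_q$ all sets of $t$ linearly independent rows of $W$ in lexicographic order, $C_k$ is the $t\times r$ matrix zero on columns outside $T_k$ whose restriction to columns $T_k$ is $(W^{T_k}_V)^{-1}$. For a finite collection $\mathcal S$ of vectors, $\mathrm{first}(\mathcal S)$ is the vector with lexicographically minimal support among the entrywise nonnegative vectors in $\mathcal S$, and is FAIL if there is none or if two or more distinct nonnegative vectors tie for the earliest support. Test $\mathbb P$: set $\hat W_i=\mathrm{first}(\{B_1M_i^U,\dots,B_pM_i^U\})$ and $\hat A^j=\mathrm{first}(\{M^j_VC_1,\dots,M^j_VC_q\})$; PASS iff none is FAIL and $\hat A^j\hat W_i=M^j_i$ for all $i,j$. *)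

theory Defs
  imports Complex_Main
begin

text \<open>Matrices are functions nat => nat => real; an m x r matrix X has entries X a k for
a < m, k < r.  Vectors are functions nat => real.  Index sets are subsets of {..<_}.\<close>

definition matprod :: "nat \<Rightarrow> (nat \<Rightarrow> nat \<Rightarrow> real) \<Rightarrow> (nat \<Rightarrow> nat \<Rightarrow> real) \<Rightarrow> (nat \<Rightarrow> nat \<Rightarrow> real)" where
  "matprod r A W = (\<lambda>a b. \<Sum>k<r. A a k * W k b)"

definition nonneg_mat :: "nat \<Rightarrow> nat \<Rightarrow> (nat \<Rightarrow> nat \<Rightarrow> real) \<Rightarrow> bool" where
  "nonneg_mat nr nc X \<longleftrightarrow> (\<forall>a<nr. \<forall>b<nc. 0 \<le> X a b)"

definition indep_cols :: "nat \<Rightarrow> (nat \<Rightarrow> nat \<Rightarrow> real) \<Rightarrow> nat set \<Rightarrow> bool" where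
  "indep_cols nr X S \<longleftrightarrow>
     (\<forall>c. (\<forall>a<nr. (\<Sum>k\<in>S. c k * X a k) = 0) \<longrightarrow> (\<forall>k\<in>S. c k = 0))"

definition indep_rows :: "nat \<Rightarrow> (nat \<Rightarrow> nat \<Rightarrow> real) \<Rightarrow> nat set \<Rightarrow> bool" where
  "indep_rows nc X U \<longleftrightarrow>
     (\<forall>c. (\<forall>b<nc. (\<Sum>a\<in>U. c a * X a b) = 0) \<longrightarrow> (\<forall>a\<in>U. c a = 0))"

definition mat_rank :: "nat \<Rightarrow> nat \<Rightarrow> (nat \<Rightarrow> nat \<Rightarrow> real) \<Rightarrow> nat" where
  "mat_rank nr nc X = Max {card S | S. S \<subseteq> {..<nc} \<and> indep_cols nr X S}"

definition set_lex_less :: "nat set \<Rightarrow> nat set \<Rightarrow> bool" where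
  "set_lex_less S T \<longleftrightarrow> card S < card T \<or>
     (card S = card T \<and> ord_class.lexordp (sorted_list_of_set S) (sorted_list_of_set T))"

definition lex_first :: "nat \<Rightarrow> (nat set \<Rightarrow> bool) \<Rightarrow> nat set" where
  "lex_first r P = (THE S. S \<subseteq> {..<r} \<and> P S \<and>
      (\<forall>T. T \<subseteq> {..<r} \<and> P T \<and> T \<noteq> S \<longrightarrow> set_lex_less S T))"

definition col_admissible :: "nat \<Rightarrow> (nat \<Rightarrow> nat \<Rightarrow> real) \<Rightarrow> nat set \<Rightarrow> (nat \<Rightarrow> real) \<Rightarrow> bool" where
  "col_admissible m A S x \<longleftrightarrow>
     (\<exists>\<alpha>. (\<forall>k\<in>S. 0 \<le> \<alpha> k) \<and> (\<forall>a<m. x a = (\<Sum>k\<in>S. \<alpha> k * A a k)))"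

definition row_admissible :: "nat \<Rightarrow> (nat \<Rightarrow> nat \<Rightarrow> real) \<Rightarrow> nat set \<Rightarrow> (nat \<Rightarrow> real) \<Rightarrow> bool" where
  "row_admissible n W T u \<longleftrightarrow>
     (\<exists>\<beta>. (\<forall>k\<in>T. 0 \<le> \<beta> k) \<and> (\<forall>b<n. u b = (\<Sum>k\<in>T. \<beta> k * W k b)))"

definition stable :: "nat \<Rightarrow> nat \<Rightarrow> nat \<Rightarrow> (nat \<Rightarrow> nat \<Rightarrow> real) \<Rightarrow> (nat \<Rightarrow> nat \<Rightarrow> real) \<Rightarrow> (nat \<Rightarrow> nat \<Rightarrow> real) \<Rightarrow> bool" where
  "stable m n r M A W \<longleftrightarrow>
     (\<forall>i<n. \<forall>k<r. W k i \<noteq> 0 \<longrightarrow>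
         k \<in> lex_first r (\<lambda>S. col_admissible m A S (\<lambda>a. M a i))) \<and>
     (\<forall>j<m. \<forall>k<r. A j k \<noteq> 0 \<longrightarrow>
         k \<in> lex_first r (\<lambda>T. row_admissible n W T (\<lambda>b. M j b)))"

text \<open>The ensemble member of A at U for the column set S: the r x |U| matrix
(rows indexed by [r], columns by U) which is zero on rows outside S and whose
restriction to rows S is the inverse of the square matrix A^U_S.\<close>
definition ens_A_mat :: "(nat \<Rightarrow> nat \<Rightarrow> real) \<Rightarrow> nat set \<Rightarrow> nat set \<Rightarrow> (nat \<Rightarrow> nat \<Rightarrow> real)" where
  "ens_A_mat A U S = (THE X. (\<forall>l u. (l \<notin> S \<or> u \<notin> U) \<longrightarrow> X l u = 0) \<and>
      (\<forall>u\<in>U. \<forall>u'\<in>U. (\<Sum>l\<in>S. A u l * X l u') = (if u = u' then 1 else 0)))"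

definition ensemble_A :: "nat \<Rightarrow> nat \<Rightarrow> (nat \<Rightarrow> nat \<Rightarrow> real) \<Rightarrow> nat set \<Rightarrow> (nat \<Rightarrow> nat \<Rightarrow> real) set" where
  "ensemble_A m r A U =
     {ens_A_mat A U S | S. S \<subseteq> {..<r} \<and> card S = card U \<and> indep_cols m A S}"

text \<open>The ensemble member of W at V for the row set T: the |V| x r matrix
(rows indexed by V, columns by [r]) which is zero on columns outside T and whose
restriction to columns T is the inverse of the square matrix W^T_V.\<close>
definition ens_W_mat :: "(nat \<Rightarrow> nat \<Rightarrow> real) \<Rightarrow> nat set \<Rightarrow> nat set \<Rightarrow> (nat \<Rightarrow> nat \<Rightarrow> real)" where
  "ens_W_mat W V T = (THE Y. (\<forall>v l. (v \<notin> V \<or> l \<notin> T) \<longrightarrow> Y v l = 0) \<and>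
      (\<forall>v\<in>V. \<forall>v'\<in>V. (\<Sum>l\<in>T. Y v l * W l v') = (if v = v' then 1 else 0)))"

definition ensemble_W :: "nat \<Rightarrow> nat \<Rightarrow> (nat \<Rightarrow> nat \<Rightarrow> real) \<Rightarrow> nat set \<Rightarrow> (nat \<Rightarrow> nat \<Rightarrow> real) set" where
  "ensemble_W n r W V =
     {ens_W_mat W V T | T. T \<subseteq> {..<r} \<and> card T = card V \<and> indep_rows n W T}"

text \<open>Support of a length-r vector, and the operator first (None = FAIL).\<close>
definition vsupp :: "nat \<Rightarrow> (nat \<Rightarrow> real) \<Rightarrow> nat set" where
  "vsupp r x = {l. l < r \<and> x l \<noteq> 0}"

definition first_vec :: "nat \<Rightarrow> (nat \<Rightarrow> real) set \<Rightarrow> (nat \<Rightarrow> real) option" where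
  "first_vec r \<S> =
     (let N = {x \<in> \<S>. \<forall>l<r. 0 \<le> x l} in
      if N = {} then None else
      (let S0 = lex_first r (\<lambda>S. S \<in> vsupp r ` N);
           cands = {x \<in> N. vsupp r x = S0} in
       if card cands = 1 then Some (the_elem cands) else None))"

definition test_P :: "nat \<Rightarrow> nat \<Rightarrow> nat \<Rightarrow> (nat \<Rightarrow> nat \<Rightarrow> real) \<Rightarrow> nat set \<Rightarrow> nat set \<Rightarrow>
    (nat \<Rightarrow> nat \<Rightarrow> real) set \<Rightarrow> (nat \<Rightarrow> nat \<Rightarrow> real) set \<Rightarrow> bool" where
  "test_P m n r M U V Bs Cs \<longleftrightarrow>
     (let hatW = (\<lambda>i. first_vec r ((\<lambda>B. \<lambda>l. \<Sum>u\<in>U. B l u * M u i) ` Bs));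
          hatA = (\<lambda>j. first_vec r ((\<lambda>C. \<lambda>l. \<Sum>v\<in>V. M j v * C v l) ` Cs)) in
      (\<forall>i<n. hatW i \<noteq> None) \<and> (\<forall>j<m. hatA j \<noteq> None) \<and>
      (\<forall>i<n. \<forall>j<m. (\<Sum>l<r. the (hatA j) l * the (hatW i) l) = M j i))"

end

theory Submission
  imports Defs "HOL-Library.Function_Algebras"
begin

definition lin_indep :: "nat set \<Rightarrow> (nat \<Rightarrow> nat \<Rightarrow> real) \<Rightarrow> bool" where
  "lin_indep I f \<longleftrightarrow> (\<forall>c. (\<forall>x. (\<Sum>i\<in>I. c i * f i x) = 0) \<longrightarrow> (\<forall>i\<in>I. c i = 0))"

definition in_span :: "nat set \<Rightarrow> (nat \<Rightarrow> nat \<Rightarrow> real) \<Rightarrow> (nat \<Rightarrow> real) \<Rightarrow> bool" where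
  "in_span I f v \<longleftrightarrow> (\<exists>c. \<forall>x. v x = (\<Sum>i\<in>I. c i * f i x))"

lemma sum_fun_apply: "(sum F A) x = (\<Sum>a\<in>A. F a x)"
  by (induct A rule: infinite_finite_induct) auto

interpretation fv: vector_space "\<lambda>(c::real) (v::nat\<Rightarrow>real). (\<lambda>x. c * v x)"
  by unfold_locales (auto simp: fun_eq_iff algebra_simps)

lemma lin_indep_inj:
  assumes "lin_indep I f" "finite I"
  shows "inj_on f I"
proof (rule inj_onI)
  fix i j assume ij: "i \<in> I" "j \<in> I" "f i = f j"
  show "i = j"
  proof (rule ccontr)
    assume ne: "i \<noteq> j"
    define c where "c = (\<lambda>l. (if l = i then 1 else 0) - (if l = j then 1 else (0::real)))"
    have "\<forall>x. (\<Sum>l\<in>I. c l * f l x) = 0"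
    proof
      fix x
      have "(\<Sum>l\<in>I. c l * f l x) = (\<Sum>l\<in>I. (if l = i then f l x else 0) - (if l = j then f l x else 0))"
        by (rule sum.cong) (auto simp: c_def)
      also have "\<dots> = (\<Sum>l\<in>I. (if l = i then f l x else 0)) - (\<Sum>l\<in>I. (if l = j then f l x else 0))"
        by (rule sum_subtractf)
      also have "\<dots> = 0" using ij assms(2) by simp
      finally show "(\<Sum>l\<in>I. c l * f l x) = 0" .
    qed
    with assms(1) ij have "c i = 0" unfolding lin_indep_def by blast
    with ne show False unfolding c_def by simp
  qed
qed

lemma G1:
  assumes fI: "finite I" and fK: "finite K" and li: "lin_indep I f"
    and sp: "\<forall>i\<in>I. in_span K g (f i)"
  shows "card I \<le> card K"
proof -
  have inj: "inj_on f I" using lin_indep_inj li fI by blast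
  have ind: "fv.independent (f ` I)"
  proof
    assume "fv.dependent (f ` I)"
    then obtain T u where T: "finite T" "T \<subseteq> f ` I" "(\<Sum>v\<in>T. (\<lambda>x. u v * v x)) = 0"
      and v0: "\<exists>v\<in>T. u v \<noteq> 0"
      unfolding fv.dependent_explicit by blast
    define c where "c = (\<lambda>i. if f i \<in> T then u (f i) else 0)"
    have "\<forall>x. (\<Sum>i\<in>I. c i * f i x) = 0"
    proof
      fix x
      have "(\<Sum>i\<in>I. c i * f i x) = (\<Sum>i\<in>{i\<in>I. f i \<in> T}. u (f i) * f i x)"
        using fI by (simp add: sum.inter_filter) (rule sum.cong, auto simp: c_def)
      also have "\<dots> = (\<Sum>v\<in>f ` {i\<in>I. f i \<in> T}. u v * v x)"
        by (rule sum.reindex[symmetric, unfolded comp_def]) (rule inj_on_subset[OF inj], auto)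
      also have "f ` {i\<in>I. f i \<in> T} = T" using T(2) by auto
      also have "(\<Sum>v\<in>T. u v * v x) = (\<Sum>v\<in>T. (\<lambda>x. u v * v x)) x" by (simp add: sum_fun_apply)
      also have "\<dots> = 0" using T(3) by simp
      finally show "(\<Sum>i\<in>I. c i * f i x) = 0" .
    qed
    with li have "\<forall>i\<in>I. c i = 0" unfolding lin_indep_def by blast
    moreover from v0 T(2) obtain i where "i \<in> I" "f i \<in> T" "u (f i) \<noteq> 0" by blast
    ultimately show False unfolding c_def by auto
  qed
  have "f ` I \<subseteq> fv.span (g ` K)"
  proof
    fix v assume "v \<in> f ` I"
    then obtain i where i: "i \<in> I" "v = f i" by blast
    then obtain c where c: "\<forall>x. v x = (\<Sum>k\<in>K. c k * g k x)" using sp unfolding in_span_def by blast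
    have "v = (\<Sum>k\<in>K. (\<lambda>x. c k * g k x))" using c by (simp add: fun_eq_iff sum_fun_apply)
    also have "\<dots> \<in> fv.span (g ` K)"
      by (intro fv.span_sum fv.span_scale fv.span_base) auto
    finally show "v \<in> fv.span (g ` K)" .
  qed
  then have "card (f ` I) \<le> card (g ` K)"
    using fv.independent_span_bound[OF finite_imageI[OF fK] ind] by blast
  also have "\<dots> \<le> card K" by (rule card_image_le[OF fK])
  finally show ?thesis using card_image[OF inj] by simp
qed

lemma G2:
  assumes li: "lin_indep I f" and j: "j \<notin> I" and fI: "finite I" and ns: "\<not> in_span I f v"
  shows "lin_indep (insert j I) (f(j := v))"
  unfolding lin_indep_def
proof (intro allI impI)
  fix c assume h: "\<forall>x. (\<Sum>i\<in>insert j I. c i * (f(j := v)) i x) = 0"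
  have h2: "\<forall>x. c j * v x + (\<Sum>i\<in>I. c i * f i x) = 0"
  proof
    fix x
    have "(\<Sum>i\<in>I. c i * (f(j := v)) i x) = (\<Sum>i\<in>I. c i * f i x)"
      using j by (intro sum.cong) auto
    then show "c j * v x + (\<Sum>i\<in>I. c i * f i x) = 0" using h[rule_format, of x] fI j by simp
  qed
  have cj: "c j = 0"
  proof (rule ccontr)
    assume cj: "c j \<noteq> 0"
    have "\<forall>x. v x = (\<Sum>i\<in>I. (- c i / c j) * f i x)"
    proof
      fix x
      have "c j * v x = - (\<Sum>i\<in>I. c i * f i x)" using h2[rule_format, of x] by linarith
      then have "v x = - (\<Sum>i\<in>I. c i * f i x) / c j" using cj by (simp add: field_simps)
      also have "\<dots> = (\<Sum>i\<in>I. (- c i / c j) * f i x)"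
        by (simp add: sum_divide_distrib sum_negf[symmetric])
      finally show "v x = (\<Sum>i\<in>I. (- c i / c j) * f i x)" .
    qed
    then have "in_span I f v" unfolding in_span_def by (rule exI[of _ "\<lambda>i. - c i / c j"])
    with ns show False by blast
  qed
  with h2 have "\<forall>x. (\<Sum>i\<in>I. c i * f i x) = 0" by simp
  with li have "\<forall>i\<in>I. c i = 0" unfolding lin_indep_def by blast
  with cj show "\<forall>i\<in>insert j I. c i = 0" by simp
qed

definition tr :: "(nat \<Rightarrow> nat \<Rightarrow> real) \<Rightarrow> (nat \<Rightarrow> nat \<Rightarrow> real)" where
  "tr X = (\<lambda>a b. X b a)"

lemma tr_tr[simp]: "tr (tr X) = X" by (simp add: tr_def)
lemma tr_apply[simp]: "tr X a b = X b a" by (simp add: tr_def)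

definition colv :: "nat \<Rightarrow> (nat \<Rightarrow> nat \<Rightarrow> real) \<Rightarrow> nat \<Rightarrow> nat \<Rightarrow> real" where
  "colv nr X k = (\<lambda>a. if a < nr then X a k else 0)"

lemma colv_sum: "(\<Sum>k\<in>S. c k * colv nr X k a) = (if a < nr then (\<Sum>k\<in>S. c k * X a k) else 0)"
  by (cases "a < nr") (simp_all add: colv_def)

lemma indep_cols_lin: "indep_cols nr X S \<longleftrightarrow> lin_indep S (colv nr X)"
  unfolding indep_cols_def lin_indep_def colv_sum
  by (metis (no_types, lifting))

lemma in_span_col: "in_span S (colv nr X) (colv nr X k) \<longleftrightarrow> (\<exists>c. \<forall>a<nr. X a k = (\<Sum>l\<in>S. c l * X a l))"
  unfolding in_span_def colv_sum by (auto simp: colv_def)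

lemma indep_rows_tr: "indep_rows nc X U = indep_cols nc (tr X) U"
  by (simp add: indep_rows_def indep_cols_def)

lemma sum_delta_mult: "finite S \<Longrightarrow> k \<in> S \<Longrightarrow> (\<Sum>l\<in>S. (if l = k then 1 else 0) * (F l::real)) = F k"
  by (simp add: if_distrib[of "\<lambda>c. c * _"] cong: if_cong)

lemma in_span_self: "finite S \<Longrightarrow> k \<in> S \<Longrightarrow> \<exists>c. \<forall>a. F a k = (\<Sum>l\<in>S. c l * (F a l::real))"
  by (intro exI[of _ "\<lambda>l. if l = k then 1 else 0"]) (simp add: sum_delta_mult)

lemma rank_fin: "finite {card S | S. S \<subseteq> {..<nc} \<and> indep_cols nr X S}"
proof -
  have "{card S | S. S \<subseteq> {..<nc} \<and> indep_cols nr X S} = card ` {S. S \<subseteq> {..<nc} \<and> indep_cols nr X S}"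
    by auto
  moreover have "finite {S. S \<subseteq> {..<nc} \<and> indep_cols nr X S}"
    by (rule finite_subset[of _ "Pow {..<nc}"]) auto
  ultimately show ?thesis by simp
qed

lemma rank_ge: "S \<subseteq> {..<nc} \<Longrightarrow> indep_cols nr X S \<Longrightarrow> card S \<le> mat_rank nr nc X"
  unfolding mat_rank_def by (rule Max_ge[OF rank_fin]) blast

lemma rank_ex: "\<exists>S. S \<subseteq> {..<nc} \<and> indep_cols nr X S \<and> card S = mat_rank nr nc X"
proof -
  have "{} \<subseteq> {..<nc} \<and> indep_cols nr X {}" by (simp add: indep_cols_def)
  then have "{card S | S. S \<subseteq> {..<nc} \<and> indep_cols nr X S} \<noteq> {}" by blast
  from Max_in[OF rank_fin this] show ?thesis unfolding mat_rank_def by auto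
qed

lemma col_span:
  assumes S: "S \<subseteq> {..<nc}" "indep_cols nr X S" "card S = mat_rank nr nc X" and k: "k < nc"
  shows "\<exists>c. \<forall>a<nr. X a k = (\<Sum>l\<in>S. c l * X a l)"
proof (rule ccontr)
  assume ns: "\<not> ?thesis"
  have fS: "finite S" using S(1) finite_subset by blast
  have kS: "k \<notin> S" using ns in_span_self[OF fS, of k X] by blast
  have "lin_indep (insert k S) ((colv nr X)(k := colv nr X k))"
    by (rule G2) (use S(2) kS fS ns in \<open>auto simp: indep_cols_lin in_span_col\<close>)
  then have "indep_cols nr X (insert k S)" by (simp add: indep_cols_lin)
  from rank_ge[OF _ this] S k have "card (insert k S) \<le> card S" by auto
  with kS fS show False by simp
qed

lemma row_bound:
  assumes U: "U \<subseteq> {..<nr}" "indep_rows nc X U"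
  shows "card U \<le> mat_rank nr nc X"
proof -
  obtain S where S: "S \<subseteq> {..<nc}" "indep_cols nr X S" "card S = mat_rank nr nc X" using rank_ex by blast
  have fS: "finite S" using S(1) finite_subset by blast
  have "\<forall>k. \<exists>c. k < nc \<longrightarrow> (\<forall>a<nr. X a k = (\<Sum>l\<in>S. c l * X a l))"
    using col_span[OF S] by blast
  then obtain C where C: "\<And>k a. k < nc \<Longrightarrow> a < nr \<Longrightarrow> X a k = (\<Sum>l\<in>S. C k l * X a l)"
    by metis
  define g where "g = (\<lambda>l b. if b < nc then C b l else 0)"
  have "\<forall>j\<in>U. in_span S g (colv nc (tr X) j)"
  proof
    fix j assume "j \<in> U"
    then have j: "j < nr" using U by auto
    show "in_span S g (colv nc (tr X) j)" unfolding in_span_def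
      by (rule exI[of _ "\<lambda>l. X j l"]) (auto simp: colv_def g_def C[OF _ j] mult.commute)
  qed
  moreover have "lin_indep U (colv nc (tr X))" using U(2) by (simp add: indep_rows_tr indep_cols_lin)
  moreover have "finite U" using U(1) finite_subset by blast
  ultimately have "card U \<le> card S" using G1 fS by blast
  with S show ?thesis by simp
qed

lemma rank_tr: "mat_rank nc nr (tr X) = mat_rank nr nc X"
proof (rule antisym)
  obtain S where S: "S \<subseteq> {..<nr}" "indep_cols nc (tr X) S" "card S = mat_rank nc nr (tr X)"
    using rank_ex by blast
  have "indep_rows nc X S" using S(2) by (simp add: indep_rows_tr)
  from row_bound[OF S(1) this] S(3) show "mat_rank nc nr (tr X) \<le> mat_rank nr nc X" by simp
next
  obtain S where S: "S \<subseteq> {..<nc}" "indep_cols nr X S" "card S = mat_rank nr nc X"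
    using rank_ex by blast
  have "indep_rows nr (tr X) S" using S(2) by (simp add: indep_rows_tr)
  from row_bound[OF S(1) this] S(3) show "mat_rank nr nc X \<le> mat_rank nc nr (tr X)" by simp
qed

lemma row_span:
  assumes U: "U \<subseteq> {..<nr}" "indep_rows nc X U" "card U = mat_rank nr nc X" and j: "j < nr"
  shows "\<exists>c. \<forall>b<nc. X j b = (\<Sum>u\<in>U. c u * X u b)"
proof -
  have "indep_cols nc (tr X) U" using U(2) by (simp add: indep_rows_tr)
  moreover have "card U = mat_rank nc nr (tr X)" using U(3) rank_tr by simp
  ultimately show ?thesis using col_span[OF U(1) _ _ j, of nc "tr X"] by simp
qed

lemma col_extend:
  assumes S0: "S0 \<subseteq> {..<nc}" "indep_cols nr X S0"
  shows "\<exists>S. S0 \<subseteq> S \<and> S \<subseteq> {..<nc} \<and> indep_cols nr X S \<and> card S = mat_rank nr nc X"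
proof -
  let ?P = "\<lambda>T. S0 \<subseteq> T \<and> T \<subseteq> {..<nc} \<and> indep_cols nr X T"
  have bnd: "\<forall>T. ?P T \<longrightarrow> card T < Suc nc"
    by (metis card_lessThan card_mono finite_lessThan less_Suc_eq_le)
  obtain T where T: "?P T" and Tmax: "\<forall>T'. ?P T' \<longrightarrow> card T' \<le> card T"
    using ex_has_greatest_nat[of ?P S0 card "Suc nc"] S0 bnd by blast
  have fT: "finite T" using T finite_subset by blast
  have "card T \<ge> mat_rank nr nc X"
  proof (rule ccontr)
    assume lt: "\<not> ?thesis"
    obtain S where S: "S \<subseteq> {..<nc}" "indep_cols nr X S" "card S = mat_rank nr nc X" using rank_ex by blast
    have fS: "finite S" using S(1) finite_subset by blast
    have "\<not> (\<forall>k\<in>S. in_span T (colv nr X) (colv nr X k))"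
    proof
      assume "\<forall>k\<in>S. in_span T (colv nr X) (colv nr X k)"
      with G1[OF fS fT] S(2) have "card S \<le> card T" by (simp add: indep_cols_lin)
      with S lt show False by simp
    qed
    then obtain k where k: "k \<in> S" "\<not> in_span T (colv nr X) (colv nr X k)" by blast
    have kT: "k \<notin> T" using k(2) in_span_self[OF fT, of k X] in_span_col by blast
    have "lin_indep (insert k T) ((colv nr X)(k := colv nr X k))"
      by (rule G2) (use T kT fT k in \<open>auto simp: indep_cols_lin\<close>)
    then have "?P (insert k T)" using T k S(1) by (auto simp: indep_cols_lin)
    with Tmax have "card (insert k T) \<le> card T" by blast
    with kT fT show False by simp
  qed
  moreover have "card T \<le> mat_rank nr nc X" using T rank_ge by blast
  ultimately show ?thesis using T by (intro exI[of _ T]) auto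
qed

section \<open>Square invertibility\<close>

lemma SQ1:
  assumes U: "U \<subseteq> {..<m}" "indep_rows r A U" "card U = mat_rank m r A"
    and S: "S \<subseteq> {..<r}" "indep_cols m A S"
    and h: "\<forall>u\<in>U. (\<Sum>l\<in>S. c l * A u l) = 0"
  shows "\<forall>l\<in>S. c l = 0"
proof -
  have "\<forall>a<m. (\<Sum>l\<in>S. c l * A a l) = 0"
  proof (intro allI impI)
    fix a assume a: "a < m"
    obtain d where d: "\<forall>b<r. A a b = (\<Sum>u\<in>U. d u * A u b)" using row_span[OF U a] by blast
    have "(\<Sum>l\<in>S. c l * A a l) = (\<Sum>l\<in>S. c l * (\<Sum>u\<in>U. d u * A u l))"
      using S(1) d by (intro sum.cong) auto
    also have "\<dots> = (\<Sum>l\<in>S. \<Sum>u\<in>U. d u * (c l * A u l))"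
      by (simp add: sum_distrib_left mult.left_commute)
    also have "\<dots> = (\<Sum>u\<in>U. \<Sum>l\<in>S. d u * (c l * A u l))"
      by (rule sum.swap)
    also have "\<dots> = (\<Sum>u\<in>U. d u * (\<Sum>l\<in>S. c l * A u l))"
      by (simp add: sum_distrib_left)
    also have "\<dots> = 0" using h by simp
    finally show "(\<Sum>l\<in>S. c l * A a l) = 0" .
  qed
  with S(2) show ?thesis unfolding indep_cols_def by blast
qed

lemma SQ2:
  assumes U: "U \<subseteq> {..<m}" "indep_rows r A U" "card U = mat_rank m r A"
    and S: "S \<subseteq> {..<r}" "indep_cols m A S" "card S = card U"
  shows "\<exists>X. (\<forall>l u. (l \<notin> S \<or> u \<notin> U) \<longrightarrow> X l u = 0) \<and>
      (\<forall>u\<in>U. \<forall>u'\<in>U. (\<Sum>l\<in>S. A u l * X l u') = (if u = u' then 1 else 0))"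
proof -
  have fS: "finite S" using S(1) finite_subset by blast
  have fU: "finite U" using U(1) finite_subset by blast
  define h where "h = (\<lambda>l u. if u \<in> U then A u l else (0::real))"
  have hs: "\<And>c u. (\<Sum>l\<in>S. c l * h l u) = (if u \<in> U then (\<Sum>l\<in>S. c l * A u l) else 0)"
    by (simp add: h_def)
  have li: "lin_indep S h" unfolding lin_indep_def
  proof (intro allI impI)
    fix c assume "\<forall>x. (\<Sum>i\<in>S. c i * h i x) = 0"
    then have "\<forall>u\<in>U. (\<Sum>l\<in>S. c l * A u l) = 0" using hs by metis
    from SQ1[OF U S(1,2) this] show "\<forall>i\<in>S. c i = 0" .
  qed
  define E where "E = (\<lambda>(u::nat) (x::nat). if x = u then 1 else (0::real))"
  have Esp: "\<And>v. (\<forall>x. x \<notin> U \<longrightarrow> v x = 0) \<Longrightarrow> in_span U E v"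
  proof -
    fix v :: "nat \<Rightarrow> real" assume v: "\<forall>x. x \<notin> U \<longrightarrow> v x = 0"
    show "in_span U E v" unfolding in_span_def
    proof (rule exI[of _ v], intro allI)
      fix x
      have "(\<Sum>u\<in>U. v u * E u x) = (\<Sum>u\<in>U. if u = x then v x else 0)"
        by (intro sum.cong) (auto simp: E_def)
      also have "\<dots> = v x" using fU v by auto
      finally show "v x = (\<Sum>u\<in>U. v u * E u x)" by simp
    qed
  qed
  have sp: "\<forall>u0\<in>U. in_span S h (E u0)"
  proof
    fix u0 assume u0: "u0 \<in> U"
    show "in_span S h (E u0)"
    proof (rule ccontr)
      assume ns: "\<not> ?thesis"
      have rS: "r \<notin> S" using S(1) by auto
      have li2: "lin_indep (insert r S) (h(r := E u0))" by (rule G2[OF li rS fS ns])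
      have "\<forall>i\<in>insert r S. in_span U E ((h(r := E u0)) i)"
        using u0 by (intro ballI Esp) (auto simp: h_def E_def)
      from G1[OF _ fU li2 this] fS have "card (insert r S) \<le> card U" by simp
      with rS fS S(3) show False by simp
    qed
  qed
  then have "\<forall>u0. \<exists>c. u0 \<in> U \<longrightarrow> (\<forall>x. E u0 x = (\<Sum>l\<in>S. c l * h l x))"
    unfolding in_span_def by blast
  then obtain C where C: "\<And>u0 x. u0 \<in> U \<Longrightarrow> E u0 x = (\<Sum>l\<in>S. C u0 l * h l x)" by metis
  define X where "X = (\<lambda>l u. if l \<in> S \<and> u \<in> U then C u l else 0)"
  show ?thesis
  proof (rule exI[of _ X], intro conjI allI impI ballI)
    fix l u assume "l \<notin> S \<or> u \<notin> U" then show "X l u = 0" by (auto simp: X_def)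
  next
    fix u u' assume uu: "u \<in> U" "u' \<in> U"
    have "(\<Sum>l\<in>S. A u l * X l u') = (\<Sum>l\<in>S. C u' l * h l u)"
      using uu by (intro sum.cong) (auto simp: X_def h_def)
    also have "\<dots> = E u' u" using C[OF uu(2)] by simp
    finally show "(\<Sum>l\<in>S. A u l * X l u') = (if u = u' then 1 else 0)" by (auto simp: E_def)
  qed
qed

lemma SQ_unique:
  assumes U: "U \<subseteq> {..<m}" "indep_rows r A U" "card U = mat_rank m r A"
    and S: "S \<subseteq> {..<r}" "indep_cols m A S" "card S = card U"
  shows "\<exists>!X. (\<forall>l u. (l \<notin> S \<or> u \<notin> U) \<longrightarrow> X l u = 0) \<and>
      (\<forall>u\<in>U. \<forall>u'\<in>U. (\<Sum>l\<in>S. A u l * X l u') = (if u = u' then 1 else 0))"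
proof (rule ex_ex1I)
  show "\<exists>X. (\<forall>l u. (l \<notin> S \<or> u \<notin> U) \<longrightarrow> X l u = 0) \<and>
      (\<forall>u\<in>U. \<forall>u'\<in>U. (\<Sum>l\<in>S. A u l * X l u') = (if u = u' then 1 else 0))"
    by (rule SQ2[OF U S])
next
  fix X Y
  assume X: "(\<forall>l u. (l \<notin> S \<or> u \<notin> U) \<longrightarrow> X l u = 0) \<and>
      (\<forall>u\<in>U. \<forall>u'\<in>U. (\<Sum>l\<in>S. A u l * X l u') = (if u = u' then 1 else 0))"
    and Y: "(\<forall>l u. (l \<notin> S \<or> u \<notin> U) \<longrightarrow> Y l u = 0) \<and>
      (\<forall>u\<in>U. \<forall>u'\<in>U. (\<Sum>l\<in>S. A u l * Y l u') = (if u = u' then 1 else 0))"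
  show "X = Y"
  proof (intro ext)
    fix l u'
    show "X l u' = Y l u'"
    proof (cases "l \<in> S \<and> u' \<in> U")
      case True
      have "\<forall>u\<in>U. (\<Sum>l\<in>S. (X l u' - Y l u') * A u l) = 0"
      proof
        fix u assume u: "u \<in> U"
        have "(\<Sum>l\<in>S. (X l u' - Y l u') * A u l) = (\<Sum>l\<in>S. A u l * X l u') - (\<Sum>l\<in>S. A u l * Y l u')"
          by (simp add: sum_subtractf[symmetric] algebra_simps)
        then show "(\<Sum>l\<in>S. (X l u' - Y l u') * A u l) = 0" using X Y u True by simp
      qed
      from SQ1[OF U S(1,2) this] True show ?thesis by simp
    next
      case False
      then show ?thesis using X Y by auto
    qed
  qed
qed

lemma ens_A_ok:
  assumes U: "U \<subseteq> {..<m}" "indep_rows r A U" "card U = mat_rank m r A"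
    and S: "S \<subseteq> {..<r}" "indep_cols m A S" "card S = card U"
  shows "(\<forall>l u. (l \<notin> S \<or> u \<notin> U) \<longrightarrow> ens_A_mat A U S l u = 0) \<and>
      (\<forall>u\<in>U. \<forall>u'\<in>U. (\<Sum>l\<in>S. A u l * ens_A_mat A U S l u') = (if u = u' then 1 else 0))"
  unfolding ens_A_mat_def by (rule theI'[OF SQ_unique[OF U S]])

section \<open>Lexicographic order\<close>

lemma sll_inj: "finite S \<Longrightarrow> finite T \<Longrightarrow> sorted_list_of_set S = sorted_list_of_set T \<Longrightarrow> S = T"
  by (metis set_sorted_list_of_set)

lemma less_asym: "set_lex_less S T \<Longrightarrow> \<not> set_lex_less T S"
  unfolding set_lex_less_def using lexordp_antisym[of "sorted_list_of_set S" "sorted_list_of_set T"] by auto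

lemma less_irrefl: "\<not> set_lex_less S S"
  using less_asym by blast

lemma less_trans: "set_lex_less S T \<Longrightarrow> set_lex_less T R \<Longrightarrow> set_lex_less S R"
  unfolding set_lex_less_def using lexordp_trans[of "sorted_list_of_set S" "sorted_list_of_set T" "sorted_list_of_set R"] by auto

lemma less_total: "finite S \<Longrightarrow> finite T \<Longrightarrow> S \<noteq> T \<Longrightarrow> set_lex_less S T \<or> set_lex_less T S"
  unfolding set_lex_less_def
  using lexordp_linear[of "sorted_list_of_set S" "sorted_list_of_set T"] sll_inj[of S T]
  by auto

lemma less_card: "set_lex_less S T \<Longrightarrow> card S \<le> card T"
  unfolding set_lex_less_def by auto

lemma min_exists:
  assumes "finite F" "F \<noteq> {}" "\<forall>S\<in>F. finite S"
  shows "\<exists>S0\<in>F. \<forall>T\<in>F. T \<noteq> S0 \<longrightarrow> set_lex_less S0 T"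
  using assms
proof (induction F rule: finite_ne_induct)
  case (singleton x)
  then show ?case by auto
next
  case (insert x F)
  then obtain S0 where S0: "S0 \<in> F" "\<forall>T\<in>F. T \<noteq> S0 \<longrightarrow> set_lex_less S0 T" by auto
  have "x \<noteq> S0" using insert S0 by auto
  then have "set_lex_less x S0 \<or> set_lex_less S0 x" using less_total insert S0 by auto
  then show ?case
  proof
    assume "set_lex_less x S0"
    then have xS0: "set_lex_less x S0" .
    have "\<forall>T\<in>insert x F. T \<noteq> x \<longrightarrow> set_lex_less x T"
    proof (intro ballI impI)
      fix T assume T: "T \<in> insert x F" "T \<noteq> x"
      show "set_lex_less x T"
      proof (cases "T = S0")
        case True with xS0 show ?thesis by simp
      next
        case False
        with T S0(2) have "set_lex_less S0 T" by blast
        with xS0 show ?thesis by (rule less_trans)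
      qed
    qed
    then show ?case by blast
  next
    assume "set_lex_less S0 x"
    then show ?case using S0 by (intro bexI[of _ S0]) blast+
  qed
qed

lemma lex_first_eq:
  assumes "S0 \<subseteq> {..<r}" "P S0" "\<forall>T. T \<subseteq> {..<r} \<and> P T \<and> T \<noteq> S0 \<longrightarrow> set_lex_less S0 T"
  shows "lex_first r P = S0"
  unfolding lex_first_def
proof (rule the_equality)
  show "S0 \<subseteq> {..<r} \<and> P S0 \<and> (\<forall>T. T \<subseteq> {..<r} \<and> P T \<and> T \<noteq> S0 \<longrightarrow> set_lex_less S0 T)"
    using assms by blast
next
  fix S assume "S \<subseteq> {..<r} \<and> P S \<and> (\<forall>T. T \<subseteq> {..<r} \<and> P T \<and> T \<noteq> S \<longrightarrow> set_lex_less S T)"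
  then have S: "S \<subseteq> {..<r}" "P S" "\<forall>T. T \<subseteq> {..<r} \<and> P T \<and> T \<noteq> S \<longrightarrow> set_lex_less S T" by auto
  show "S = S0"
  proof (rule ccontr)
    assume ne: "S \<noteq> S0"
    then have "set_lex_less S S0" using S(3) assms(1,2) by blast
    moreover have "set_lex_less S0 S" using assms(3) S(1,2) ne by blast
    ultimately show False using less_asym by blast
  qed
qed

lemma lex_first_spec:
  assumes "S \<subseteq> {..<r}" "P S"
  shows "lex_first r P \<subseteq> {..<r} \<and> P (lex_first r P) \<and>
    (\<forall>T. T \<subseteq> {..<r} \<and> P T \<and> T \<noteq> lex_first r P \<longrightarrow> set_lex_less (lex_first r P) T)"
proof -
  define F where "F = {T. T \<subseteq> {..<r} \<and> P T}"
  have f1: "finite F" unfolding F_def by (rule finite_subset[of _ "Pow {..<r}"]) auto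
  have f2: "F \<noteq> {}" using assms unfolding F_def by blast
  have f3: "\<forall>T\<in>F. finite T" unfolding F_def by (auto intro: finite_subset[of _ "{..<r}"])
  obtain S0 where S0: "S0 \<in> F" "\<forall>T\<in>F. T \<noteq> S0 \<longrightarrow> set_lex_less S0 T"
    using min_exists[OF f1 f2 f3] by blast
  have eq: "lex_first r P = S0"
  proof (rule lex_first_eq)
    show "S0 \<subseteq> {..<r}" using S0(1) by (simp add: F_def)
    show "P S0" using S0(1) by (simp add: F_def)
    show "\<forall>T. T \<subseteq> {..<r} \<and> P T \<and> T \<noteq> S0 \<longrightarrow> set_lex_less S0 T" using S0(2) by (simp add: F_def)
  qed
  show ?thesis unfolding eq using S0 by (simp add: F_def)
qed

lemma drop_zero:
  assumes "finite T" "k \<in> T" "\<forall>l\<in>T. 0 \<le> \<beta> l" "\<beta> k = 0"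
    "\<forall>a<m. x a = (\<Sum>l\<in>T. \<beta> l * A a l)"
  shows "col_admissible m A (T - {k}) x"
  unfolding col_admissible_def
proof (rule exI[of _ \<beta>], intro conjI allI impI ballI)
  fix l assume "l \<in> T - {k}" then show "0 \<le> \<beta> l" using assms(3) by auto
next
  fix a assume "a < m"
  then have "x a = (\<Sum>l\<in>T. \<beta> l * A a l)" using assms(5) by blast
  also have "\<dots> = \<beta> k * A a k + (\<Sum>l\<in>T - {k}. \<beta> l * A a l)"
    using sum.remove[OF assms(1,2)] by blast
  finally show "x a = (\<Sum>l\<in>T - {k}. \<beta> l * A a l)" using assms(4) by simp
qed

lemma make_zero:
  assumes fT: "finite T" and \<alpha>: "\<forall>l\<in>T. 0 \<le> \<alpha> l" and rep: "\<forall>a<m. x a = (\<Sum>l\<in>T. \<alpha> l * A a l)"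
    and dep: "\<not> indep_cols m A T"
  shows "\<exists>\<beta> k. k \<in> T \<and> \<beta> k = 0 \<and> (\<forall>l\<in>T. 0 \<le> \<beta> l) \<and> (\<forall>a<m. x a = (\<Sum>l\<in>T. \<beta> l * A a l))"
proof -
  obtain c k1 where c: "\<forall>a<m. (\<Sum>l\<in>T. c l * A a l) = 0" and k1: "k1 \<in> T" "c k1 \<noteq> 0"
    using dep unfolding indep_cols_def by blast
  obtain c' where c': "\<forall>a<m. (\<Sum>l\<in>T. c' l * A a l) = 0" "c' k1 > 0"
  proof (cases "c k1 > 0")
    case True then show ?thesis using that c by blast
  next
    case False
    then have "(- c) k1 > 0" using k1 by simp
    moreover have "\<forall>a<m. (\<Sum>l\<in>T. (- c) l * A a l) = 0"
      using c by (simp add: sum_negf)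
    ultimately show ?thesis using that by blast
  qed
  define K where "K = {l\<in>T. c' l > 0}"
  have fK: "finite K" using fT unfolding K_def by simp
  have K1: "k1 \<in> K" using k1 c' unfolding K_def by simp
  define \<mu> where "\<mu> = Min ((\<lambda>l. \<alpha> l / c' l) ` K)"
  have "\<mu> \<in> (\<lambda>l. \<alpha> l / c' l) ` K" unfolding \<mu>_def using fK K1 by (intro Min_in) auto
  then obtain k0 where k0: "k0 \<in> K" "\<mu> = \<alpha> k0 / c' k0" by blast
  have k0T: "k0 \<in> T" "c' k0 > 0" using k0 unfolding K_def by auto
  have \<mu>0: "0 \<le> \<mu>" using k0 k0T \<alpha> by simp
  have \<mu>le: "\<And>l. l \<in> K \<Longrightarrow> \<mu> \<le> \<alpha> l / c' l" unfolding \<mu>_def using fK by (intro Min_le) auto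
  define \<beta> where "\<beta> = (\<lambda>l. \<alpha> l - \<mu> * c' l)"
  show ?thesis
  proof (intro exI[of _ \<beta>] exI[of _ k0] conjI ballI allI impI)
    show "k0 \<in> T" by (rule k0T(1))
    show "\<beta> k0 = 0" unfolding \<beta>_def k0(2) using k0T(2) by simp
  next
    fix l assume l: "l \<in> T"
    show "0 \<le> \<beta> l"
    proof (cases "c' l > 0")
      case True
      then have "l \<in> K" using l unfolding K_def by simp
      then have "\<mu> \<le> \<alpha> l / c' l" by (rule \<mu>le)
      then have "\<mu> * c' l \<le> \<alpha> l" using True by (simp add: pos_le_divide_eq)
      then show ?thesis unfolding \<beta>_def by simp
    next
      case False
      then have "\<mu> * c' l \<le> 0" using \<mu>0 by (simp add: mult_nonneg_nonpos)
      moreover have "0 \<le> \<alpha> l" using \<alpha> l by blast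
      ultimately show ?thesis unfolding \<beta>_def by simp
    qed
  next
    fix a assume a: "a < m"
    have "(\<Sum>l\<in>T. \<beta> l * A a l) = (\<Sum>l\<in>T. \<alpha> l * A a l) - \<mu> * (\<Sum>l\<in>T. c' l * A a l)"
      unfolding \<beta>_def by (simp add: algebra_simps sum_subtractf sum_distrib_left)
    also have "\<dots> = x a" using rep c' a by simp
    finally show "x a = (\<Sum>l\<in>T. \<beta> l * A a l)" by simp
  qed
qed

lemma CA:
  assumes Pr: "col_admissible m A {..<r} x"
    and S0: "S0 = lex_first r (\<lambda>S. col_admissible m A S x)"
  shows "S0 \<subseteq> {..<r} \<and> indep_cols m A S0 \<and>
    (\<exists>\<alpha>. (\<forall>k\<in>S0. 0 < \<alpha> k) \<and> (\<forall>a<m. x a = (\<Sum>k\<in>S0. \<alpha> k * A a k))) \<and>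
    (\<forall>T. T \<subseteq> {..<r} \<and> col_admissible m A T x \<and> T \<noteq> S0 \<longrightarrow> set_lex_less S0 T)"
proof -
  have spec: "S0 \<subseteq> {..<r}" "col_admissible m A S0 x"
    "\<forall>T. T \<subseteq> {..<r} \<and> col_admissible m A T x \<and> T \<noteq> S0 \<longrightarrow> set_lex_less S0 T"
    using lex_first_spec[of "{..<r}" r "\<lambda>S. col_admissible m A S x", OF _ Pr] S0 by auto
  have fS0: "finite S0" using spec(1) finite_subset by blast
  have mincard: "\<And>T. T \<subseteq> {..<r} \<Longrightarrow> col_admissible m A T x \<Longrightarrow> card S0 \<le> card T"
    using spec(3) less_card by (metis order_refl)
  have nozero: "\<And>\<beta> k. k \<in> S0 \<Longrightarrow> \<beta> k = 0 \<Longrightarrow> \<forall>l\<in>S0. 0 \<le> \<beta> l \<Longrightarrow>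
      \<forall>a<m. x a = (\<Sum>l\<in>S0. \<beta> l * A a l) \<Longrightarrow> False"
  proof -
    fix \<beta> k assume h: "k \<in> S0" "\<beta> k = 0" "\<forall>l\<in>S0. 0 \<le> \<beta> l" "\<forall>a<m. x a = (\<Sum>l\<in>S0. \<beta> l * A a l)"
    have "col_admissible m A (S0 - {k}) x" by (rule drop_zero[OF fS0 h(1,3,2,4)])
    moreover have "S0 - {k} \<subseteq> {..<r}" using spec(1) by auto
    ultimately have "card S0 \<le> card (S0 - {k})" by (rule mincard[rotated])
    moreover have "card (S0 - {k}) < card S0" using fS0 h(1) by (meson card_Diff1_less)
    ultimately show False by simp
  qed
  obtain \<alpha> where \<alpha>: "\<forall>k\<in>S0. 0 \<le> \<alpha> k" "\<forall>a<m. x a = (\<Sum>k\<in>S0. \<alpha> k * A a k)"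
    using spec(2) unfolding col_admissible_def by blast
  have pos: "\<forall>k\<in>S0. 0 < \<alpha> k"
  proof
    fix k assume k: "k \<in> S0"
    show "0 < \<alpha> k"
    proof (rule ccontr)
      assume "\<not> 0 < \<alpha> k"
      then have "\<alpha> k = 0" using \<alpha>(1) k by force
      then show False using nozero[OF k _ \<alpha>] by blast
    qed
  qed
  have ind: "indep_cols m A S0"
  proof (rule ccontr)
    assume "\<not> indep_cols m A S0"
    from make_zero[OF fS0 \<alpha> this] nozero show False by blast
  qed
  show ?thesis using spec ind pos \<alpha>(2) by blast
qed

lemma row_comb_sum:
  fixes A :: "nat \<Rightarrow> nat \<Rightarrow> real"
  assumes T: "T \<subseteq> {..<r}" and d: "\<forall>b<r. A a b = (\<Sum>u\<in>U. d u * A u b)"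
  shows "(\<Sum>l\<in>T. A a l * z l) = (\<Sum>u\<in>U. d u * (\<Sum>l\<in>T. A u l * z l))"
proof -
  have "(\<Sum>l\<in>T. A a l * z l) = (\<Sum>l\<in>T. (\<Sum>u\<in>U. d u * A u l) * z l)"
    using T d by (intro sum.cong) auto
  also have "\<dots> = (\<Sum>l\<in>T. \<Sum>u\<in>U. d u * (A u l * z l))"
    by (rule sum.cong[OF refl]) (simp add: sum_distrib_right sum_distrib_left mult_ac)
  also have "\<dots> = (\<Sum>u\<in>U. \<Sum>l\<in>T. d u * (A u l * z l))" by (rule sum.swap)
  also have "\<dots> = (\<Sum>u\<in>U. d u * (\<Sum>l\<in>T. A u l * z l))" by (simp add: sum_distrib_left)
  finally show ?thesis .
qed

lemma EXT:
  assumes MAW: "\<forall>a<m. \<forall>b<n. M a b = matprod r A W a b"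
    and U: "U \<subseteq> {..<m}" "indep_rows r A U" "card U = mat_rank m r A"
    and i: "i < n" and T: "T \<subseteq> {..<r}"
    and h: "\<forall>u\<in>U. (\<Sum>l\<in>T. A u l * z l) = M u i"
  shows "\<forall>a<m. (\<Sum>l\<in>T. A a l * z l) = M a i"
proof (intro allI impI)
  fix a assume a: "a < m"
  obtain d where d: "\<forall>b<r. A a b = (\<Sum>u\<in>U. d u * A u b)" using row_span[OF U a] by blast
  have "(\<Sum>l\<in>T. A a l * z l) = (\<Sum>u\<in>U. d u * M u i)"
    using row_comb_sum[OF T d] h by simp
  also have "\<dots> = (\<Sum>u\<in>U. d u * (\<Sum>l\<in>{..<r}. A u l * W l i))"
    using MAW U(1) i by (intro sum.cong) (auto simp: matprod_def)
  also have "\<dots> = (\<Sum>l\<in>{..<r}. A a l * W l i)"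
    using row_comb_sum[OF order_refl d] by simp
  also have "\<dots> = M a i" using MAW a i by (simp add: matprod_def)
  finally show "(\<Sum>l\<in>T. A a l * z l) = M a i" .
qed

lemma ens_vec:
  assumes MAW: "\<forall>a<m. \<forall>b<n. M a b = matprod r A W a b"
    and U: "U \<subseteq> {..<m}" "indep_rows r A U" "card U = mat_rank m r A"
    and i: "i < n"
    and S: "S \<subseteq> {..<r}" "indep_cols m A S" "card S = card U"
    and y: "y = (\<lambda>l. \<Sum>u\<in>U. ens_A_mat A U S l u * M u i)"
  shows "(\<forall>l. l \<notin> S \<longrightarrow> y l = 0) \<and> (\<forall>u\<in>U. (\<Sum>l\<in>S. A u l * y l) = M u i)
     \<and> (\<forall>a<m. (\<Sum>l\<in>S. A a l * y l) = M a i)"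
proof -
  have fU: "finite U" using U(1) finite_subset by blast
  note ok = ens_A_ok[OF U S]
  have Y1: "\<forall>l. l \<notin> S \<longrightarrow> y l = 0" using ok unfolding y by simp
  have Y2: "\<forall>u\<in>U. (\<Sum>l\<in>S. A u l * y l) = M u i"
  proof
    fix u assume u: "u \<in> U"
    have "(\<Sum>l\<in>S. A u l * y l) = (\<Sum>l\<in>S. \<Sum>u'\<in>U. M u' i * (A u l * ens_A_mat A U S l u'))"
      unfolding y by (simp add: sum_distrib_left algebra_simps)
    also have "\<dots> = (\<Sum>u'\<in>U. \<Sum>l\<in>S. M u' i * (A u l * ens_A_mat A U S l u'))" by (rule sum.swap)
    also have "\<dots> = (\<Sum>u'\<in>U. M u' i * (\<Sum>l\<in>S. A u l * ens_A_mat A U S l u'))"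
      by (simp add: sum_distrib_left)
    also have "\<dots> = (\<Sum>u'\<in>U. if u' = u then M u' i else 0)"
      using ok u by (intro sum.cong) auto
    also have "\<dots> = M u i" using fU u by simp
    finally show "(\<Sum>l\<in>S. A u l * y l) = M u i" .
  qed
  show ?thesis using Y1 Y2 EXT[OF MAW U i S(1) Y2] by blast
qed

lemma indep_colsD:
  assumes "indep_cols nr X S" "\<forall>a<nr. (\<Sum>k\<in>S. c k * X a k) = 0"
  shows "\<forall>k\<in>S. c k = 0"
  using assms unfolding indep_cols_def by blast

lemma HALF:
  assumes nW: "nonneg_mat r n W"
    and MAW: "\<forall>a<m. \<forall>b<n. M a b = matprod r A W a b"
    and st: "\<forall>i<n. \<forall>k<r. W k i \<noteq> 0 \<longrightarrow> k \<in> lex_first r (\<lambda>S. col_admissible m A S (\<lambda>a. M a i))"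
    and U: "U \<subseteq> {..<m}" "indep_rows r A U" "card U = mat_rank m r A"
    and i: "i < n"
  shows "\<exists>w. first_vec r ((\<lambda>B. \<lambda>l. \<Sum>u\<in>U. B l u * M u i) ` ensemble_A m r A U) = Some w
      \<and> (\<forall>l<r. w l = W l i)"
proof -
  define x where "x = (\<lambda>a. M a i)"
  have Pr: "col_admissible m A {..<r} x" unfolding col_admissible_def
    by (rule exI[of _ "\<lambda>k. W k i"])
      (use nW MAW i in \<open>auto simp: x_def nonneg_mat_def matprod_def mult.commute\<close>)
  define S0 where "S0 = lex_first r (\<lambda>S. col_admissible m A S x)"
  note C = CA[OF Pr S0_def]
  have S0sub: "S0 \<subseteq> {..<r}" using C[THEN conjunct1] .
  have ind0: "indep_cols m A S0" using C[THEN conjunct2, THEN conjunct1] .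
  have min0: "\<forall>T. T \<subseteq> {..<r} \<and> col_admissible m A T x \<and> T \<noteq> S0 \<longrightarrow> set_lex_less S0 T"
    using C[THEN conjunct2, THEN conjunct2, THEN conjunct2] .
  obtain \<alpha>0 where \<alpha>0pos: "\<forall>k\<in>S0. 0 < \<alpha>0 k" and rep0: "\<forall>a<m. x a = (\<Sum>k\<in>S0. \<alpha>0 k * A a k)"
    using C[THEN conjunct2, THEN conjunct2, THEN conjunct1] by (elim exE conjE)
  have fS0: "finite S0" using S0sub finite_subset by blast
  define w0 where "w0 = (\<lambda>l. if l \<in> S0 then \<alpha>0 l else 0)"
  have uniq: "\<And>z. (\<forall>l. l \<notin> S0 \<longrightarrow> z l = 0) \<Longrightarrow> (\<forall>a<m. x a = (\<Sum>k\<in>S0. z k * A a k)) \<Longrightarrow> z = w0"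
  proof -
    fix z assume zs: "\<forall>l. l \<notin> S0 \<longrightarrow> z l = 0" and zr: "\<forall>a<m. x a = (\<Sum>k\<in>S0. z k * A a k)"
    have "\<forall>a<m. (\<Sum>k\<in>S0. (z k - \<alpha>0 k) * A a k) = 0"
    proof (intro allI impI)
      fix a assume a: "a < m"
      have "(\<Sum>k\<in>S0. (z k - \<alpha>0 k) * A a k) = (\<Sum>k\<in>S0. z k * A a k) - (\<Sum>k\<in>S0. \<alpha>0 k * A a k)"
        by (simp add: left_diff_distrib sum_subtractf)
      then show "(\<Sum>k\<in>S0. (z k - \<alpha>0 k) * A a k) = 0" using zr rep0 a by simp
    qed
    from indep_colsD[OF ind0 this] have "\<forall>k\<in>S0. z k - \<alpha>0 k = 0" by simp
    then have zk: "\<And>k. k \<in> S0 \<Longrightarrow> z k = \<alpha>0 k" by simp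
    show "z = w0"
    proof (rule ext)
      fix l show "z l = w0 l"
        using zs zk by (cases "l \<in> S0") (simp_all add: w0_def)
    qed
  qed
  have Wi: "\<forall>l<r. w0 l = W l i"
  proof -
    have Wz: "W k i = 0" if k: "k < r" "k \<notin> S0" for k
    proof (rule ccontr)
      assume "W k i \<noteq> 0"
      then have "k \<in> lex_first r (\<lambda>S. col_admissible m A S (\<lambda>a. M a i))"
        using st i k(1) by blast
      then show False using k(2) unfolding S0_def x_def by simp
    qed
    define z where "z = (\<lambda>l. if l \<in> S0 then W l i else 0)"
    have "z = w0"
    proof (rule uniq)
      show "\<forall>l. l \<notin> S0 \<longrightarrow> z l = 0" by (simp add: z_def)
      show "\<forall>a<m. x a = (\<Sum>k\<in>S0. z k * A a k)"
      proof (intro allI impI)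
        fix a assume a: "a < m"
        have "x a = (\<Sum>k\<in>{..<r}. A a k * W k i)" using MAW a i by (simp add: x_def matprod_def)
        also have "\<dots> = (\<Sum>k\<in>S0. A a k * W k i)"
          by (rule sum.mono_neutral_right) (use S0sub in \<open>auto simp: Wz\<close>)
        also have "\<dots> = (\<Sum>k\<in>S0. z k * A a k)" by (intro sum.cong) (auto simp: z_def)
        finally show "x a = (\<Sum>k\<in>S0. z k * A a k)" .
      qed
    qed
    show ?thesis
    proof (intro allI impI)
      fix l assume l: "l < r"
      have "w0 l = z l" using \<open>z = w0\<close> by simp
      also have "z l = W l i" using Wz[OF l] by (cases "l \<in> S0") (simp_all add: z_def)
      finally show "w0 l = W l i" .
    qed
  qed
  obtain S1 where S1: "S0 \<subseteq> S1" "S1 \<subseteq> {..<r}" "indep_cols m A S1" "card S1 = mat_rank m r A"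
    using col_extend[OF S0sub ind0] by blast
  have S1c: "card S1 = card U" using S1(4) U(3) by simp
  have fS1: "finite S1" using S1(2) finite_subset by blast
  define \<SS> where "\<SS> = (\<lambda>B. \<lambda>l. \<Sum>u\<in>U. B l u * M u i) ` ensemble_A m r A U"
  have memS: "\<And>y. y \<in> \<SS> \<Longrightarrow> \<exists>S. S \<subseteq> {..<r} \<and> indep_cols m A S \<and> card S = card U \<and>
      y = (\<lambda>l. \<Sum>u\<in>U. ens_A_mat A U S l u * M u i)"
    unfolding \<SS>_def ensemble_A_def by blast
  have yprop: "\<And>y. y \<in> \<SS> \<Longrightarrow> (\<forall>l. r \<le> l \<longrightarrow> y l = 0) \<and> (\<forall>a<m. x a = (\<Sum>l\<in>vsupp r y. y l * A a l))"
  proof -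
    fix y assume "y \<in> \<SS>"
    then obtain S where S: "S \<subseteq> {..<r}" "indep_cols m A S" "card S = card U"
      and y: "y = (\<lambda>l. \<Sum>u\<in>U. ens_A_mat A U S l u * M u i)" using memS by blast
    have fS: "finite S" using S(1) finite_subset by blast
    from ens_vec[OF MAW U i S y] have Y1: "\<forall>l. l \<notin> S \<longrightarrow> y l = 0"
      and Y3: "\<forall>a<m. (\<Sum>l\<in>S. A a l * y l) = M a i" by auto
    have "\<forall>l. r \<le> l \<longrightarrow> y l = 0" using Y1 S(1) by auto
    moreover have "\<forall>a<m. x a = (\<Sum>l\<in>vsupp r y. y l * A a l)"
    proof (intro allI impI)
      fix a assume a: "a < m"
      have "x a = (\<Sum>l\<in>S. A a l * y l)" using Y3 a by (simp add: x_def)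
      also have "\<dots> = (\<Sum>l\<in>vsupp r y. A a l * y l)"
        using fS Y1 S(1) by (intro sum.mono_neutral_right) (auto simp: vsupp_def)
      finally show "x a = (\<Sum>l\<in>vsupp r y. y l * A a l)" by (simp add: mult.commute)
    qed
    ultimately show "(\<forall>l. r \<le> l \<longrightarrow> y l = 0) \<and> (\<forall>a<m. x a = (\<Sum>l\<in>vsupp r y. y l * A a l))" ..
  qed
  have w0S: "w0 \<in> \<SS>"
  proof -
    define y1 where "y1 = (\<lambda>l. \<Sum>u\<in>U. ens_A_mat A U S1 l u * M u i)"
    have y1S: "y1 \<in> \<SS>" unfolding \<SS>_def ensemble_A_def y1_def using S1 S1c by blast
    from ens_vec[OF MAW U i S1(2,3) S1c y1_def] have Y1: "\<forall>l. l \<notin> S1 \<longrightarrow> y1 l = 0"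
      and Y3: "\<forall>a<m. (\<Sum>l\<in>S1. A a l * y1 l) = M a i" by auto
    have W3: "\<forall>a<m. (\<Sum>l\<in>S1. A a l * w0 l) = M a i"
    proof (intro allI impI)
      fix a assume a: "a < m"
      have "(\<Sum>l\<in>S1. A a l * w0 l) = (\<Sum>l\<in>S0. A a l * w0 l)"
        using fS1 S1(1) by (intro sum.mono_neutral_right) (auto simp: w0_def)
      also have "\<dots> = (\<Sum>l\<in>S0. \<alpha>0 l * A a l)" by (intro sum.cong) (auto simp: w0_def)
      also have "\<dots> = M a i" using rep0 a by (simp add: x_def)
      finally show "(\<Sum>l\<in>S1. A a l * w0 l) = M a i" .
    qed
    have "\<forall>a<m. (\<Sum>l\<in>S1. (y1 l - w0 l) * A a l) = 0"
    proof (intro allI impI)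
      fix a assume a: "a < m"
      have "(\<Sum>l\<in>S1. (y1 l - w0 l) * A a l) = (\<Sum>l\<in>S1. A a l * y1 l) - (\<Sum>l\<in>S1. A a l * w0 l)"
        by (simp add: sum_subtractf[symmetric] algebra_simps)
      then show "(\<Sum>l\<in>S1. (y1 l - w0 l) * A a l) = 0" using Y3 W3 a by simp
    qed
    from indep_colsD[OF S1(3) this] have "\<forall>l\<in>S1. y1 l - w0 l = 0" by simp
    then have eqS1: "\<And>l. l \<in> S1 \<Longrightarrow> y1 l = w0 l" by simp
    have "y1 = w0"
    proof (rule ext)
      fix l show "y1 l = w0 l"
      proof (cases "l \<in> S1")
        case True then show ?thesis by (rule eqS1)
      next
        case False
        then have "l \<notin> S0" using S1(1) by blast
        then show ?thesis using False Y1 by (simp add: w0_def)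
      qed
    qed
    with y1S show ?thesis by simp
  qed
  have w0nn: "\<forall>l<r. 0 \<le> w0 l" using \<alpha>0pos by (auto simp: w0_def less_imp_le)
  have vs0: "vsupp r w0 = S0" using \<alpha>0pos S0sub by (auto simp: vsupp_def w0_def)
  define N where "N = {y \<in> \<SS>. \<forall>l<r. 0 \<le> y l}"
  have w0N: "w0 \<in> N" using w0S w0nn by (simp add: N_def)
  have adm: "\<And>y. y \<in> N \<Longrightarrow> vsupp r y \<subseteq> {..<r} \<and> col_admissible m A (vsupp r y) x"
  proof -
    fix y assume y: "y \<in> N"
    then have "y \<in> \<SS>" "\<forall>l<r. 0 \<le> y l" by (auto simp: N_def)
    with yprop[OF this(1)] show "vsupp r y \<subseteq> {..<r} \<and> col_admissible m A (vsupp r y) x"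
      unfolding col_admissible_def by (auto simp: vsupp_def intro!: exI[of _ y])
  qed
  have lf: "lex_first r (\<lambda>S. S \<in> vsupp r ` N) = S0"
  proof (rule lex_first_eq)
    show "S0 \<subseteq> {..<r}" by (rule S0sub)
    show "S0 \<in> vsupp r ` N" using w0N vs0 by force
    show "\<forall>T. T \<subseteq> {..<r} \<and> T \<in> vsupp r ` N \<and> T \<noteq> S0 \<longrightarrow> set_lex_less S0 T"
      using adm min0 by blast
  qed
  have cands: "{y \<in> N. vsupp r y = S0} = {w0}"
  proof
    show "{w0} \<subseteq> {y \<in> N. vsupp r y = S0}" using w0N vs0 by simp
  next
    show "{y \<in> N. vsupp r y = S0} \<subseteq> {w0}"
    proof
      fix y assume "y \<in> {y \<in> N. vsupp r y = S0}"
      then have y: "y \<in> \<SS>" "vsupp r y = S0" by (auto simp: N_def)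
      note yp = yprop[OF y(1)]
      have "y = w0"
      proof (rule uniq)
        show "\<forall>l. l \<notin> S0 \<longrightarrow> y l = 0"
        proof (intro allI impI)
          fix l assume l: "l \<notin> S0"
          show "y l = 0"
          proof (cases "l < r")
            case True then show ?thesis using l y(2) by (auto simp: vsupp_def)
          next
            case False then show ?thesis using yp by simp
          qed
        qed
        show "\<forall>a<m. x a = (\<Sum>k\<in>S0. y k * A a k)" using yp y(2) by simp
      qed
      then show "y \<in> {w0}" by simp
    qed
  qed
  have "first_vec r \<SS> = Some w0"
    unfolding first_vec_def Let_def N_def[symmetric] using w0N lf cands by auto
  then show ?thesis using Wi unfolding \<SS>_def by blast
qed

lemma col_adm_tr: "col_admissible n (tr W) S x = row_admissible n W S x"
  by (simp add: col_admissible_def row_admissible_def)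

lemma ens_W_tr:
  assumes V: "V \<subseteq> {..<n}" "indep_rows r (tr W) V" "card V = mat_rank n r (tr W)"
    and T: "T \<subseteq> {..<r}" "indep_cols n (tr W) T" "card T = card V"
  shows "ens_W_mat W V T = tr (ens_A_mat (tr W) V T)"
proof -
  define B where "B = ens_A_mat (tr W) V T"
  note ex1 = SQ_unique[OF V T]
  have ok: "(\<forall>l u. (l \<notin> T \<or> u \<notin> V) \<longrightarrow> B l u = 0) \<and>
      (\<forall>u\<in>V. \<forall>u'\<in>V. (\<Sum>l\<in>T. tr W u l * B l u') = (if u = u' then 1 else 0))"
    unfolding B_def by (rule ens_A_ok[OF V T])
  show ?thesis unfolding ens_W_mat_def B_def[symmetric]
  proof (rule the_equality)
    show "(\<forall>v l. (v \<notin> V \<or> l \<notin> T) \<longrightarrow> tr B v l = 0) \<and>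
      (\<forall>v\<in>V. \<forall>v'\<in>V. (\<Sum>l\<in>T. tr B v l * W l v') = (if v = v' then 1 else 0))"
    proof (intro conjI allI impI ballI)
      fix v l assume "v \<notin> V \<or> l \<notin> T" then show "tr B v l = 0" using ok by auto
    next
      fix v v' assume vv: "v \<in> V" "v' \<in> V"
      have "(\<Sum>l\<in>T. tr B v l * W l v') = (\<Sum>l\<in>T. tr W v' l * B l v)"
        by (simp add: mult.commute)
      also have "\<dots> = (if v' = v then 1 else 0)" using ok vv by blast
      finally show "(\<Sum>l\<in>T. tr B v l * W l v') = (if v = v' then 1 else 0)" by auto
    qed
  next
    fix Y assume Y: "(\<forall>v l. (v \<notin> V \<or> l \<notin> T) \<longrightarrow> Y v l = 0) \<and>
      (\<forall>v\<in>V. \<forall>v'\<in>V. (\<Sum>l\<in>T. Y v l * W l v') = (if v = v' then 1 else 0))"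
    have "(\<forall>l u. (l \<notin> T \<or> u \<notin> V) \<longrightarrow> tr Y l u = 0) \<and>
      (\<forall>u\<in>V. \<forall>u'\<in>V. (\<Sum>l\<in>T. tr W u l * tr Y l u') = (if u = u' then 1 else 0))"
    proof (intro conjI allI impI ballI)
      fix l u assume "l \<notin> T \<or> u \<notin> V" then show "tr Y l u = 0" using Y by auto
    next
      fix u u' assume uu: "u \<in> V" "u' \<in> V"
      have "(\<Sum>l\<in>T. tr W u l * tr Y l u') = (\<Sum>l\<in>T. Y u' l * W l u)"
        by (simp add: mult.commute)
      also have "\<dots> = (if u' = u then 1 else 0)" using Y uu by blast
      finally show "(\<Sum>l\<in>T. tr W u l * tr Y l u') = (if u = u' then 1 else 0)" by auto
    qed
    with ok ex1 have "tr Y = B" by blast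
    then show "Y = tr B" by (metis tr_tr)
  qed
qed

theorem mainTheorem9:
  fixes m n r :: nat
    and M A W :: "nat \<Rightarrow> nat \<Rightarrow> real"
    and U V :: "nat set"
  assumes "nonneg_mat m n M"
    and "nonneg_mat m r A"
    and "nonneg_mat r n W"
    and "\<forall>a<m. \<forall>b<n. M a b = matprod r A W a b"
    and "stable m n r M A W"
    and "U \<subseteq> {..<m}" and "card U = mat_rank m r A" and "indep_rows r A U"
    and "V \<subseteq> {..<n}" and "card V = mat_rank r n W" and "indep_cols r W V"
  shows "test_P m n r M U V (ensemble_A m r A U) (ensemble_W n r W V)"
proof -
  note nA = assms(2) and nW = assms(3) and MAW = assms(4)
  have stA: "\<forall>i<n. \<forall>k<r. W k i \<noteq> 0 \<longrightarrow> k \<in> lex_first r (\<lambda>S. col_admissible m A S (\<lambda>a. M a i))"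
    using assms(5) unfolding stable_def by (rule conjunct1)
  have stW: "\<forall>j<m. \<forall>k<r. A j k \<noteq> 0 \<longrightarrow> k \<in> lex_first r (\<lambda>T. row_admissible n W T (\<lambda>b. M j b))"
    using assms(5) unfolding stable_def by (rule conjunct2)
  have hW: "\<And>i. i < n \<Longrightarrow> \<exists>w. first_vec r ((\<lambda>B. \<lambda>l. \<Sum>u\<in>U. B l u * M u i) ` ensemble_A m r A U) = Some w
      \<and> (\<forall>l<r. w l = W l i)"
    by (rule HALF[OF nW MAW stA assms(6) assms(8) assms(7)])
  have nA': "nonneg_mat r m (tr A)" using nA by (simp add: nonneg_mat_def)
  have MAW': "\<forall>a<n. \<forall>b<m. tr M a b = matprod r (tr W) (tr A) a b"
    using MAW by (simp add: matprod_def mult.commute)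
  have stW': "\<forall>i<m. \<forall>k<r. tr A k i \<noteq> 0 \<longrightarrow> k \<in> lex_first r (\<lambda>S. col_admissible n (tr W) S (\<lambda>a. tr M a i))"
    using stW by (simp add: col_adm_tr)
  have V1: "indep_rows r (tr W) V" using assms(11) by (simp add: indep_rows_tr)
  have V2: "card V = mat_rank n r (tr W)" using assms(10) rank_tr[of n r W] by simp
  have hA: "\<And>j. j < m \<Longrightarrow> \<exists>w. first_vec r ((\<lambda>B. \<lambda>l. \<Sum>v\<in>V. B l v * tr M v j) ` ensemble_A n r (tr W) V) = Some w
      \<and> (\<forall>l<r. w l = tr A l j)"
    by (rule HALF[OF nA' MAW' stW' assms(9) V1 V2])
  have setEq: "\<And>j. (\<lambda>C. \<lambda>l. \<Sum>v\<in>V. M j v * C v l) ` ensemble_W n r W V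
      = (\<lambda>B. \<lambda>l. \<Sum>v\<in>V. B l v * tr M v j) ` ensemble_A n r (tr W) V"
  proof -
    fix j
    have eW: "ensemble_W n r W V = (\<lambda>T. tr (ens_A_mat (tr W) V T)) ` {T. T \<subseteq> {..<r} \<and> card T = card V \<and> indep_cols n (tr W) T}"
    proof -
      have "ensemble_W n r W V = (\<lambda>T. ens_W_mat W V T) ` {T. T \<subseteq> {..<r} \<and> card T = card V \<and> indep_cols n (tr W) T}"
        unfolding ensemble_W_def by (auto simp: indep_rows_tr)
      also have "\<dots> = (\<lambda>T. tr (ens_A_mat (tr W) V T)) ` {T. T \<subseteq> {..<r} \<and> card T = card V \<and> indep_cols n (tr W) T}"
        by (rule image_cong[OF refl]) (rule ens_W_tr[OF assms(9) V1 V2], auto)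
      finally show ?thesis .
    qed
    have eA: "ensemble_A n r (tr W) V = (\<lambda>T. ens_A_mat (tr W) V T) ` {T. T \<subseteq> {..<r} \<and> card T = card V \<and> indep_cols n (tr W) T}"
      unfolding ensemble_A_def by auto
    show "(\<lambda>C. \<lambda>l. \<Sum>v\<in>V. M j v * C v l) ` ensemble_W n r W V
      = (\<lambda>B. \<lambda>l. \<Sum>v\<in>V. B l v * tr M v j) ` ensemble_A n r (tr W) V"
      unfolding eW eA image_image by (simp add: mult.commute)
  qed
  have hA2: "\<And>j. j < m \<Longrightarrow> \<exists>w. first_vec r ((\<lambda>C. \<lambda>l. \<Sum>v\<in>V. M j v * C v l) ` ensemble_W n r W V) = Some w
      \<and> (\<forall>l<r. w l = A j l)"
    using hA setEq by simp
  show ?thesis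
    unfolding test_P_def Let_def
  proof (intro conjI allI impI)
    fix i assume "i < n"
    then show "first_vec r ((\<lambda>B. \<lambda>l. \<Sum>u\<in>U. B l u * M u i) ` ensemble_A m r A U) \<noteq> None"
      using hW by fastforce
  next
    fix j assume "j < m"
    then show "first_vec r ((\<lambda>C. \<lambda>l. \<Sum>v\<in>V. M j v * C v l) ` ensemble_W n r W V) \<noteq> None"
      using hA2 by fastforce
  next
    fix i j assume ij: "i < n" "j < m"
    obtain w where w: "first_vec r ((\<lambda>B. \<lambda>l. \<Sum>u\<in>U. B l u * M u i) ` ensemble_A m r A U) = Some w"
      "\<forall>l<r. w l = W l i" using hW[OF ij(1)] by blast
    obtain a where a: "first_vec r ((\<lambda>C. \<lambda>l. \<Sum>v\<in>V. M j v * C v l) ` ensemble_W n r W V) = Some a"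
      "\<forall>l<r. a l = A j l" using hA2[OF ij(2)] by blast
    have "(\<Sum>l<r. a l * w l) = (\<Sum>l<r. A j l * W l i)" using w(2) a(2) by simp
    also have "\<dots> = M j i" using MAW ij by (simp add: matprod_def)
    finally show "(\<Sum>l<r. the (first_vec r ((\<lambda>C. \<lambda>l. \<Sum>v\<in>V. M j v * C v l) ` ensemble_W n r W V)) l *
        the (first_vec r ((\<lambda>B. \<lambda>l. \<Sum>u\<in>U. B l u * M u i) ` ensemble_A m r A U)) l) = M j i"
      using w(1) a(1) by simp
  qed
qed

end
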